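(* Let $K$ be a field with a non-trivial non-Archimedean valuation $|\cdot|$, let $X$ be a complete non-Archimedean normed space over $K$, fix $k\in\mathbb N$ with $|2k^3|\neq0$, and for $f:G\to X$ let $$Df(x,y)=f(kx+y)+f(kx-y)-k[f(x+y)+f(x-y)]-2(k^3-k)f(x).$$ Let $\alpha:[0,\infty)\to[0,\infty)$ be a function satisfying (i) $\alpha(|k|t)\le\alpha(|k|)\alpha(t)$ for all $t\ge0$, and (ii) $\alpha(|k|)<|k|^3$. Let $\delta>0$, let $G$ be a normed space, and let $f:G\to X$ satisfy $$\|Df(x,y)\|\le\delta[\alpha(\|x\|)+\alpha(\|y\|)]\quad\text{for all }x,y\in G.$$ Then there exists a unique cubic mapping $C:G\to X$ (i.e. $DC(x,y)=0$ for all $x,y\in G$) such that $$\|f(x)-C(x)\|\le\frac{1}{|2k^3|}\delta\,\alpha(\|x\|)\quad\text{for all }x\in G.$$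
   Context: A non-Archimedean field is a field $K$ with $|\cdot|:K\to[0,\infty)$ such that $|r|=0$ iff $r=0$, $|rs|=|r||s|$, $|r+s|\le\max\{|r|,|s|\}$. A non-Archimedean norm on a $K$-vector space satisfies $\|x\|=0$ iff $x=0$, $\|rx\|=|r|\|x\|$, $\|x+y\|\le\max\{\|x\|,\|y\|\}$. Integers are regarded as elements of $K$ and $|k|$ is the valuation of $k$ in $K$. *)

theory Defs
  imports Complex_Main
begin

definition nonarch_valuation :: "('k::field \<Rightarrow> real) \<Rightarrow> bool" where
  "nonarch_valuation v \<longleftrightarrow>
     (\<forall>r. v r \<ge> 0) \<and> (\<forall>r. v r = 0 \<longleftrightarrow> r = 0) \<and>
     (\<forall>r s. v (r * s) = v r * v s) \<and> (\<forall>r s. v (r + s) \<le> max (v r) (v s))"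

definition nontrivial_valuation :: "('k::field \<Rightarrow> real) \<Rightarrow> bool" where
  "nontrivial_valuation v \<longleftrightarrow> (\<exists>r. v r \<noteq> 0 \<and> v r \<noteq> 1)"

definition nonarch_normed_space ::
  "('k::field \<Rightarrow> 'x::ab_group_add \<Rightarrow> 'x) \<Rightarrow> ('k \<Rightarrow> real) \<Rightarrow> ('x \<Rightarrow> real) \<Rightarrow> bool" where
  "nonarch_normed_space sc v n \<longleftrightarrow> vector_space sc \<and>
     (\<forall>x. n x = 0 \<longleftrightarrow> x = 0) \<and> (\<forall>r x. n (sc r x) = v r * n x) \<and>
     (\<forall>x y. n (x + y) \<le> max (n x) (n y))"

definition normed_space_over ::
  "('k::field \<Rightarrow> 'x::ab_group_add \<Rightarrow> 'x) \<Rightarrow> ('k \<Rightarrow> real) \<Rightarrow> ('x \<Rightarrow> real) \<Rightarrow> bool" where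
  "normed_space_over sc v n \<longleftrightarrow> vector_space sc \<and>
     (\<forall>x. n x = 0 \<longleftrightarrow> x = 0) \<and> (\<forall>r x. n (sc r x) = v r * n x) \<and>
     (\<forall>x y. n (x + y) \<le> n x + n y)"

definition norm_complete :: "('x::ab_group_add \<Rightarrow> real) \<Rightarrow> bool" where
  "norm_complete n \<longleftrightarrow> (\<forall>s :: nat \<Rightarrow> 'x.
     (\<forall>e>0. \<exists>N. \<forall>i\<ge>N. \<forall>j\<ge>N. n (s i - s j) < e) \<longrightarrow>
     (\<exists>L. \<forall>e>0. \<exists>N. \<forall>i\<ge>N. n (s i - L) < e))"

definition Dcubic ::
  "('k::field \<Rightarrow> 'g::ab_group_add \<Rightarrow> 'g) \<Rightarrow> ('k \<Rightarrow> 'x::ab_group_add \<Rightarrow> 'x) \<Rightarrow> nat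
    \<Rightarrow> ('g \<Rightarrow> 'x) \<Rightarrow> 'g \<Rightarrow> 'g \<Rightarrow> 'x" where
  "Dcubic scG scX k f x y =
     f (scG (of_nat k) x + y) + f (scG (of_nat k) x - y)
     - scX (of_nat k) (f (x + y) + f (x - y))
     - scX (2 * ((of_nat k) ^ 3 - of_nat k)) (f x)"

end

theory Submission
  imports Defs
begin

locale cubsetup = VX: vector_space scX + VG: vector_space scG
  for scX :: "'k::field \<Rightarrow> 'x::ab_group_add \<Rightarrow> 'x"
  and scG :: "'k \<Rightarrow> 'g::ab_group_add \<Rightarrow> 'g" +
  fixes v :: "'k \<Rightarrow> real" and nX :: "'x \<Rightarrow> real" and nG :: "'g \<Rightarrow> real"
    and k :: nat and \<alpha> :: "real \<Rightarrow> real" and \<delta> :: real and f :: "'g \<Rightarrow> 'x"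
  assumes val: "nonarch_valuation v"
    and nsX: "nonarch_normed_space scX v nX" and compl: "norm_complete nX"
    and nsG: "normed_space_over scG v nG"
    and v2k: "v (2 * of_nat k ^ 3) \<noteq> 0"
    and apos: "\<forall>t\<ge>0. \<alpha> t \<ge> 0"
    and amul: "\<forall>t\<ge>0. \<alpha> (v (of_nat k) * t) \<le> \<alpha> (v (of_nat k)) * \<alpha> t"
    and alt: "\<alpha> (v (of_nat k)) < v (of_nat k) ^ 3"
    and dpos: "\<delta> > 0"
    and Dbound: "\<forall>x y. nX (Dcubic scG scX k f x y) \<le> \<delta> * (\<alpha> (nG x) + \<alpha> (nG y))"
begin

abbreviation "c \<equiv> (of_nat k :: 'k)"

lemma v_nonneg: "v r \<ge> 0" using val by (simp add: nonarch_valuation_def)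
lemma v_mult: "v (r * s) = v r * v s" using val by (simp add: nonarch_valuation_def)
lemma v_add: "v (r + s) \<le> max (v r) (v s)" using val by (simp add: nonarch_valuation_def)
lemma v_zero_iff: "v r = 0 \<longleftrightarrow> r = 0" using val by (simp add: nonarch_valuation_def)

lemma v_one: "v 1 = 1"
proof -
  have "v 1 = v 1 * v 1" using v_mult[of 1 1] by simp
  moreover have "v 1 \<noteq> 0" using v_zero_iff by simp
  ultimately show ?thesis by (metis mult_cancel_right1)
qed

lemma v_minus_one: "v (-1) = 1"
proof -
  have "v (-1) * v (-1) = 1" using v_mult[of "-1" "-1"] v_one by simp
  then show ?thesis using v_nonneg[of "-1"]
    by (metis abs_of_nonneg real_sqrt_abs2 real_sqrt_one power2_eq_square)
qed

lemma v_power: "v (r ^ n) = v r ^ n"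
  by (induction n) (auto simp: v_one v_mult)

lemma v_inverse: "r \<noteq> 0 \<Longrightarrow> v (inverse r) = inverse (v r)"
proof -
  assume "r \<noteq> 0"
  then have "v r * v (inverse r) = 1" using v_mult[of r "inverse r"] v_one by simp
  moreover have "v r \<noteq> 0" using \<open>r \<noteq> 0\<close> v_zero_iff by simp
  ultimately show ?thesis by (metis nonzero_inverse_eq_divide divide_eq_eq mult.commute)
qed

lemma v_nat_le1: "v (of_nat n) \<le> 1"
proof (induction n)
  case 0 then show ?case using v_zero_iff[of 0] by simp
next
  case (Suc n)
  have "v (of_nat (Suc n)) = v (of_nat n + 1)" by (simp add: add.commute)
  also have "\<dots> \<le> max (v (of_nat n)) (v 1)" by (rule v_add)
  finally show ?case using Suc v_one by simp
qed

lemma nX_scale: "nX (scX r x) = v r * nX x" using nsX by (simp add: nonarch_normed_space_def)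
lemma nX_ultra: "nX (x + y) \<le> max (nX x) (nX y)" using nsX by (simp add: nonarch_normed_space_def)
lemma nX_zero_iff: "nX x = 0 \<longleftrightarrow> x = 0" using nsX by (simp add: nonarch_normed_space_def)
lemma nX_minus: "nX (- x) = nX x"
  using nX_scale[of "-1" x] v_minus_one by simp
lemma nX_nonneg: "nX x \<ge> 0"
proof -
  have "0 = nX (x + - x)" using nX_zero_iff by simp
  also have "\<dots> \<le> max (nX x) (nX (-x))" by (rule nX_ultra)
  finally show ?thesis using nX_minus by simp
qed
lemma nX_tri: "nX (x + y) \<le> nX x + nX y"
  using nX_ultra[of x y] nX_nonneg[of x] nX_nonneg[of y] by linarith
lemma nX_commute: "nX (x - y) = nX (y - x)"
  using nX_minus[of "x - y"] by simp
lemma nX_diff_tri: "nX (x - z) \<le> nX (x - y) + nX (y - z)"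
  using nX_tri[of "x - y" "y - z"] by simp

lemma nG_scale: "nG (scG r x) = v r * nG x" using nsG by (simp add: normed_space_over_def)
lemma nG_zero: "nG 0 = 0" using nsG by (simp add: normed_space_over_def)
lemma nG_nonneg: "nG x \<ge> 0"
proof -
  have m: "nG (- x) = nG x" using nG_scale[of "-1" x] v_minus_one by simp
  have "0 = nG (x + - x)" using nG_zero by simp
  also have "\<dots> \<le> nG x + nG (-x)" using nsG unfolding normed_space_over_def by blast
  finally show ?thesis using m by simp
qed

definition "a = v c"
definition "q = \<alpha> a / a ^ 3"
definition "B = \<delta> / v (2 * c ^ 3)"
definition "e = inverse (c ^ 3)"
definition "g n x = scX (e ^ n) (f (scG (c ^ n) x))"

lemma c_nz: "c \<noteq> 0" using v2k v_zero_iff by auto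
lemma two_nz: "(2::'k) \<noteq> 0" using v2k v_zero_iff by auto
lemma a_pos: "a > 0" using c_nz v_zero_iff v_nonneg unfolding a_def by (metis less_eq_real_def)
lemma a_le1: "a \<le> 1" unfolding a_def by (rule v_nat_le1)
lemma aa_nonneg: "\<alpha> a \<ge> 0" using apos a_pos by simp
lemma aa_lt: "\<alpha> a < a ^ 3" using alt unfolding a_def by simp
lemma q_nonneg: "q \<ge> 0" unfolding q_def using aa_nonneg a_pos by simp
lemma q_lt1: "q < 1" unfolding q_def using aa_lt a_pos by simp
lemma B_nonneg: "B \<ge> 0" unfolding B_def using dpos v_nonneg by simp
lemma alpha0: "\<alpha> 0 = 0"
proof -
  have h: "\<alpha> 0 \<le> \<alpha> a * \<alpha> 0" using amul unfolding a_def by (metis mult_zero_right order_refl)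
  have "a ^ 3 \<le> 1" using a_le1 a_pos by (simp add: power_le_one)
  then have a1: "\<alpha> a < 1" using aa_lt by linarith
  have z: "\<alpha> 0 \<ge> 0" using apos by simp
  show ?thesis
  proof (rule ccontr)
    assume "\<alpha> 0 \<noteq> 0"
    then have "\<alpha> 0 > 0" using z by simp
    then have "\<alpha> a * \<alpha> 0 < 1 * \<alpha> 0" using a1 by (rule mult_strict_right_mono[rotated])
    then show False using h by simp
  qed
qed

lemma alpha_pow: "t \<ge> 0 \<Longrightarrow> \<alpha> (a ^ n * t) \<le> \<alpha> a ^ n * \<alpha> t"
proof (induction n)
  case 0 then show ?case by simp
next
  case (Suc n)
  have nn: "a ^ n * t \<ge> 0" using Suc.prems a_pos by simp
  have "\<alpha> (a ^ Suc n * t) = \<alpha> (a * (a ^ n * t))" by (simp add: mult.assoc)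
  also have "\<dots> \<le> \<alpha> a * \<alpha> (a ^ n * t)" using amul nn unfolding a_def by blast
  also have "\<dots> \<le> \<alpha> a * (\<alpha> a ^ n * \<alpha> t)" using Suc aa_nonneg mult_left_mono by blast
  finally show ?case by (simp add: mult.assoc)
qed

lemma v_e: "v e = inverse (a ^ 3)"
  unfolding e_def a_def using c_nz by (simp add: v_inverse v_power)

lemma dbl: "scX 2 z = z + z"
  by (metis VX.scale_left_distrib VX.scale_one one_add_one)

lemma D0: "Dcubic scG scX k h x 0 = scX 2 (h (scG c x)) - scX (2 * c ^ 3) (h x)"
proof -
  have 1: "scX c (h x + h x) = scX (2 * c) (h x)"
    by (metis dbl VX.scale_scale mult.commute)
  have 2: "scX (2 * c) (h x) + scX (2 * (c ^ 3 - c)) (h x) = scX (2 * c ^ 3) (h x)"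
    by (metis VX.scale_left_distrib add_diff_cancel_left'  diff_add_cancel distrib_left add.commute)
  have "Dcubic scG scX k h x 0 = scX 2 (h (scG c x)) - (scX c (h x + h x) + scX (2 * (c ^ 3 - c)) (h x))"
    unfolding Dcubic_def dbl by (simp add: algebra_simps)
  then show ?thesis using 1 2 by simp
qed

lemma step: "nX (scX e (f (scG c x)) - f x) \<le> B * \<alpha> (nG x)"
proof -
  have eq: "scX e (f (scG c x)) - f x = scX (inverse (2 * c ^ 3)) (Dcubic scG scX k f x 0)"
  proof -
    have s1: "inverse (2 * c ^ 3) * 2 = e" unfolding e_def using two_nz by (simp add: field_simps)
    have s2: "inverse (2 * c ^ 3) * (2 * c ^ 3) = 1" using two_nz c_nz by simp
    show ?thesis unfolding D0 VX.scale_right_diff_distrib VX.scale_scale s1 s2 by simp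
  qed
  have "nX (scX e (f (scG c x)) - f x) = inverse (v (2 * c ^ 3)) * nX (Dcubic scG scX k f x 0)"
  proof -
    have "v (inverse (2 * c ^ 3)) = inverse (v (2 * c ^ 3))" using c_nz two_nz by (intro v_inverse) simp
    then show ?thesis unfolding eq nX_scale by simp
  qed
  also have "\<dots> \<le> inverse (v (2 * c ^ 3)) * (\<delta> * (\<alpha> (nG x) + \<alpha> (nG 0)))"
    using Dbound v_nonneg by (simp add: mult_left_mono)
  also have "\<dots> = B * \<alpha> (nG x)" unfolding B_def nG_zero alpha0 by (simp add: field_simps)
  finally show ?thesis .
qed

lemma g_step: "nX (g (Suc n) x - g n x) \<le> B * q ^ n * \<alpha> (nG x)"
proof -
  define y where "y = scG (c ^ n) x"
  have "g (Suc n) x = scX (e ^ n) (scX e (f (scG c y)))"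
    unfolding g_def y_def by (simp add: mult.commute)
  then have "g (Suc n) x - g n x = scX (e ^ n) (scX e (f (scG c y)) - f y)"
    unfolding VX.scale_right_diff_distrib by (simp add: g_def y_def)
  then have "nX (g (Suc n) x - g n x) = v e ^ n * nX (scX e (f (scG c y)) - f y)"
    by (simp add: nX_scale v_power)
  also have "\<dots> \<le> v e ^ n * (B * \<alpha> (nG y))"
    using step v_nonneg by (simp add: mult_left_mono)
  also have "nG y = a ^ n * nG x" unfolding y_def a_def by (simp add: nG_scale v_power)
  also have "v e ^ n * (B * \<alpha> (a ^ n * nG x)) \<le> v e ^ n * (B * (\<alpha> a ^ n * \<alpha> (nG x)))"
    using alpha_pow[OF nG_nonneg] B_nonneg v_nonneg by (simp add: mult_left_mono)
  also have "\<dots> = B * q ^ n * \<alpha> (nG x)"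
    unfolding v_e q_def using a_pos by (simp add: field_simps power_divide power_mult_distrib)
  finally show ?thesis .
qed

lemma g_cauchy: "n \<le> m \<Longrightarrow> nX (g m x - g n x) \<le> B * q ^ n * \<alpha> (nG x)"
proof (induction m rule: dec_induct)
  case base
  have "nX 0 = 0" using nX_zero_iff by simp
  moreover have "\<alpha> (nG x) \<ge> 0" using apos nG_nonneg by simp
  ultimately show ?case using B_nonneg q_nonneg by simp
next
  case (step m)
  have "nX (g (Suc m) x - g n x) = nX ((g (Suc m) x - g m x) + (g m x - g n x))" by simp
  also have "\<dots> \<le> max (nX (g (Suc m) x - g m x)) (nX (g m x - g n x))" by (rule nX_ultra)
  also have "\<dots> \<le> B * q ^ n * \<alpha> (nG x)"
  proof -
    have "q ^ m \<le> q ^ n" using step.hyps q_nonneg q_lt1 by (simp add: power_decreasing)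
    then have "B * q ^ m * \<alpha> (nG x) \<le> B * q ^ n * \<alpha> (nG x)"
      using B_nonneg apos nG_nonneg by (simp add: mult_left_mono mult_right_mono)
    then show ?thesis using g_step[of m x] step.IH by simp
  qed
  finally show ?case .
qed

definition "C x = (SOME L. \<forall>\<epsilon>>0. \<exists>N. \<forall>i\<ge>N. nX (g i x - L) < \<epsilon>)"

lemma qlim: "(\<lambda>n. q ^ n) \<longlonglongrightarrow> 0"
  using LIMSEQ_power_zero[of q] q_nonneg q_lt1 by simp

lemma alpha_nG: "\<alpha> (nG x) \<ge> 0" using apos nG_nonneg by simp

lemma g_Cauchy_ex: "\<exists>L. \<forall>\<epsilon>>0. \<exists>N. \<forall>i\<ge>N. nX (g i x - L) < \<epsilon>"
proof -
  have lim: "(\<lambda>n. B * q ^ n * \<alpha> (nG x)) \<longlonglongrightarrow> 0"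
    using tendsto_mult_left_zero[OF tendsto_mult_right_zero[OF qlim, of B], of "\<alpha> (nG x)"] by simp
  have "\<forall>\<epsilon>>0. \<exists>N. \<forall>i\<ge>N. \<forall>j\<ge>N. nX (g i x - g j x) < \<epsilon>"
  proof (intro allI impI)
    fix \<epsilon> :: real assume "\<epsilon> > 0"
    then obtain N where N: "\<forall>n\<ge>N. norm (B * q ^ n * \<alpha> (nG x) - 0) < \<epsilon>"
      using lim unfolding LIMSEQ_iff by blast
    show "\<exists>N. \<forall>i\<ge>N. \<forall>j\<ge>N. nX (g i x - g j x) < \<epsilon>"
    proof (intro exI allI impI)
      fix i j assume i: "i \<ge> N" and j: "j \<ge> N"
      show "nX (g i x - g j x) < \<epsilon>"
      proof (cases "j \<le> i")
        case True then have "nX (g i x - g j x) \<le> B * q ^ j * \<alpha> (nG x)" by (rule g_cauchy)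
        moreover have "norm (B * q ^ j * \<alpha> (nG x) - 0) < \<epsilon>" using N j by blast
        ultimately show ?thesis by simp
      next
        case False then have "nX (g j x - g i x) \<le> B * q ^ i * \<alpha> (nG x)" by (intro g_cauchy) simp
        moreover have "norm (B * q ^ i * \<alpha> (nG x) - 0) < \<epsilon>" using N i by blast
        ultimately show ?thesis using nX_commute[of "g i x" "g j x"] by simp
      qed
    qed
  qed
  then show ?thesis using compl[unfolded norm_complete_def, rule_format, of "\<lambda>i. g i x"] by blast
qed

lemma C_conv: "(\<lambda>i. nX (g i x - C x)) \<longlonglongrightarrow> 0"
proof -
  have "\<forall>\<epsilon>>0. \<exists>N. \<forall>i\<ge>N. nX (g i x - C x) < \<epsilon>" unfolding C_def using g_Cauchy_ex by (rule someI_ex)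
  then show ?thesis by (intro LIMSEQ_I) (simp add: nX_nonneg)
qed

lemma C_conv': "(\<lambda>i. nX (C x - g i x)) \<longlonglongrightarrow> 0"
  using C_conv[of x] nX_commute by simp

lemma le_lim0: "(w::nat\<Rightarrow>real) \<longlonglongrightarrow> 0 \<Longrightarrow> \<forall>n. x \<le> w n \<Longrightarrow> x \<le> 0"
  by (metis LIMSEQ_le_const)

lemma g0: "g 0 x = f x" by (simp add: g_def)

lemma approx: "nX (f x - C x) \<le> B * \<alpha> (nG x)"
proof -
  have "\<forall>n. nX (f x - C x) - B * \<alpha> (nG x) \<le> nX (g n x - C x)"
  proof
    fix n
    have "nX (f x - C x) \<le> nX (f x - g n x) + nX (g n x - C x)" by (rule nX_diff_tri)
    moreover have "nX (f x - g n x) \<le> B * \<alpha> (nG x)"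
      using g_cauchy[of 0 n x] g0 nX_commute[of "f x" "g n x"] by simp
    ultimately show "nX (f x - C x) - B * \<alpha> (nG x) \<le> nX (g n x - C x)" by simp
  qed
  then have "nX (f x - C x) - B * \<alpha> (nG x) \<le> 0" using C_conv by (intro le_lim0)
  then show ?thesis by simp
qed

lemma nX_diff_le: "nX (x - y) \<le> nX x + nX y"
  using nX_tri[of x "- y"] nX_minus[of y] by simp

lemma veq: "v e ^ n * \<alpha> a ^ n = q ^ n"
  unfolding v_e q_def by (simp add: power_mult_distrib[symmetric] divide_inverse mult.commute)

lemma Dg: "Dcubic scG scX k (g n) x y = scX (e ^ n) (Dcubic scG scX k f (scG (c ^ n) x) (scG (c ^ n) y))"
  unfolding Dcubic_def g_def
  by (simp add: VG.scale_right_distrib VG.scale_right_diff_distrib VX.scale_right_distrib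
      VX.scale_right_diff_distrib mult.commute)

lemma Dgb: "nX (Dcubic scG scX k (g n) x y) \<le> \<delta> * q ^ n * (\<alpha> (nG x) + \<alpha> (nG y))"
proof -
  have "nX (Dcubic scG scX k (g n) x y) = v e ^ n * nX (Dcubic scG scX k f (scG (c ^ n) x) (scG (c ^ n) y))"
    unfolding Dg nX_scale v_power ..
  also have "\<dots> \<le> v e ^ n * (\<delta> * (\<alpha> (a ^ n * nG x) + \<alpha> (a ^ n * nG y)))"
  proof -
    have "nX (Dcubic scG scX k f (scG (c ^ n) x) (scG (c ^ n) y)) \<le> \<delta> * (\<alpha> (nG (scG (c ^ n) x)) + \<alpha> (nG (scG (c ^ n) y)))"
      using Dbound by blast
    then show ?thesis using v_nonneg[of e] unfolding a_def nG_scale v_power by (simp add: mult_left_mono)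
  qed
  also have "\<dots> \<le> v e ^ n * (\<delta> * (\<alpha> a ^ n * \<alpha> (nG x) + \<alpha> a ^ n * \<alpha> (nG y)))"
    using alpha_pow[OF nG_nonneg, of n x] alpha_pow[OF nG_nonneg, of n y] v_nonneg dpos
    by (intro mult_left_mono) auto
  also have "\<dots> = \<delta> * (v e ^ n * \<alpha> a ^ n) * (\<alpha> (nG x) + \<alpha> (nG y))" by (simp add: algebra_simps)
  finally show ?thesis unfolding veq .
qed

lemma cubicC: "Dcubic scG scX k C x y = 0"
proof -
  define w where "w = 2 * (c ^ 3 - c)"
  define d where "d z n = nX (C z - g n z)" for z n
  have Ddiff: "Dcubic scG scX k C x y - Dcubic scG scX k (g n) x y =
     ((C (scG c x + y) - g n (scG c x + y)) + (C (scG c x - y) - g n (scG c x - y)))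
     - scX c ((C (x + y) - g n (x + y)) + (C (x - y) - g n (x - y))) - scX w (C x - g n x)" for n
    unfolding Dcubic_def w_def by (simp add: VX.scale_right_distrib VX.scale_right_diff_distrib algebra_simps)
  define h where "h n = d (scG c x + y) n + d (scG c x - y) n + v c * (d (x + y) n + d (x - y) n)
     + v w * d x n + \<delta> * q ^ n * (\<alpha> (nG x) + \<alpha> (nG y))" for n
  have hb: "nX (Dcubic scG scX k C x y) \<le> h n" for n
  proof -
    have "nX (Dcubic scG scX k C x y) \<le> nX (Dcubic scG scX k C x y - Dcubic scG scX k (g n) x y)
        + nX (Dcubic scG scX k (g n) x y)"
      using nX_tri[of "Dcubic scG scX k C x y - Dcubic scG scX k (g n) x y" "Dcubic scG scX k (g n) x y"] by simp
    also have "nX (Dcubic scG scX k C x y - Dcubic scG scX k (g n) x y)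
       \<le> d (scG c x + y) n + d (scG c x - y) n + v c * (d (x + y) n + d (x - y) n) + v w * d x n"
    proof -
      have t1: "nX (A + B) \<le> nX A + nX B" for A B by (rule nX_tri)
      have "nX (Dcubic scG scX k C x y - Dcubic scG scX k (g n) x y)
        \<le> nX ((C (scG c x + y) - g n (scG c x + y)) + (C (scG c x - y) - g n (scG c x - y)))
         + nX (scX c ((C (x + y) - g n (x + y)) + (C (x - y) - g n (x - y)))) + nX (scX w (C x - g n x))"
        unfolding Ddiff by (meson nX_diff_le add_mono order_trans order_refl)
      also have "\<dots> \<le> (d (scG c x + y) n + d (scG c x - y) n) + v c * (d (x + y) n + d (x - y) n) + v w * d x n"
        unfolding nX_scale d_def using t1 v_nonneg by (intro add_mono mult_left_mono) auto
      finally show ?thesis by simp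
    qed
    finally show ?thesis using Dgb[of n x y] unfolding h_def by linarith
  qed
  have hl: "h \<longlonglongrightarrow> 0"
  proof -
    have dl: "(\<lambda>n. d z n) \<longlonglongrightarrow> 0" for z unfolding d_def by (rule C_conv')
    have ql: "(\<lambda>n. \<delta> * q ^ n * (\<alpha> (nG x) + \<alpha> (nG y))) \<longlonglongrightarrow> 0"
      using tendsto_mult_left_zero[OF tendsto_mult_right_zero[OF qlim, of \<delta>], of "\<alpha> (nG x) + \<alpha> (nG y)"] by simp
    show ?thesis unfolding h_def
      by (intro tendsto_add_zero tendsto_mult_right_zero dl ql)
  qed
  have "nX (Dcubic scG scX k C x y) \<le> 0" using hl hb by (intro le_lim0) auto
  then show ?thesis using nX_nonneg nX_zero_iff by (metis antisym)
qed

lemma cub_hom: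
  assumes "\<forall>x y. Dcubic scG scX k h x y = 0"
  shows "h (scG c x) = scX (c ^ 3) (h x)"
proof -
  have "scX 2 (h (scG c x)) = scX (2 * c ^ 3) (h x)" using assms D0[of h x] by simp
  also have "\<dots> = scX 2 (scX (c ^ 3) (h x))" by simp
  finally show ?thesis by (rule VX.scale_left_imp_eq[OF two_nz])
qed

lemma cub_iter:
  assumes "\<forall>x y. Dcubic scG scX k h x y = 0"
  shows "h x = scX (e ^ n) (h (scG (c ^ n) x))"
proof (induction n)
  case 0 then show ?case by simp
next
  case (Suc n)
  have "h (scG (c ^ Suc n) x) = scX (c ^ 3) (h (scG (c ^ n) x))" using cub_hom[OF assms, of "scG (c ^ n) x"] by simp
  then have "scX (e ^ Suc n) (h (scG (c ^ Suc n) x)) = scX (e ^ n * (e * c ^ 3)) (h (scG (c ^ n) x))"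
    by (simp add: mult.assoc mult.commute mult.left_commute)
  also have "e * c ^ 3 = 1" unfolding e_def using c_nz by simp
  finally show ?case using Suc by simp
qed

lemma uniq:
  assumes cub: "\<forall>x y. Dcubic scG scX k C' x y = 0"
    and bd: "\<forall>x. nX (f x - C' x) \<le> B * \<alpha> (nG x)"
  shows "C' x = C x"
proof -
  have cC: "\<forall>x y. Dcubic scG scX k C x y = 0" using cubicC by blast
  have b: "nX (C x - C' x) \<le> 2 * B * \<alpha> (nG x) * q ^ n" for n
  proof -
    define y where "y = scG (c ^ n) x"
    have "C x - C' x = scX (e ^ n) (C y - C' y)"
      using cub_iter[OF cC, of x n] cub_iter[OF cub, of x n] unfolding y_def
      by (simp add: VX.scale_right_diff_distrib)
    then have "nX (C x - C' x) = v e ^ n * nX (C y - C' y)" by (simp add: nX_scale v_power)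
    also have "\<dots> \<le> v e ^ n * (2 * B * \<alpha> (nG y))"
    proof -
      have "nX (C y - C' y) \<le> nX (C y - f y) + nX (f y - C' y)" by (rule nX_diff_tri)
      also have "\<dots> \<le> 2 * B * \<alpha> (nG y)" using approx[of y] bd[rule_format, of y] nX_commute[of "C y" "f y"] by linarith
      finally show ?thesis using v_nonneg by (simp add: mult_left_mono)
    qed
    also have "nG y = a ^ n * nG x" unfolding y_def a_def by (simp add: nG_scale v_power)
    also have "v e ^ n * (2 * B * \<alpha> (a ^ n * nG x)) \<le> v e ^ n * (2 * B * (\<alpha> a ^ n * \<alpha> (nG x)))"
      using alpha_pow[OF nG_nonneg] B_nonneg v_nonneg by (simp add: mult_left_mono)
    also have "\<dots> = 2 * B * \<alpha> (nG x) * (v e ^ n * \<alpha> a ^ n)" by (simp add: algebra_simps)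
    finally show ?thesis unfolding veq .
  qed
  have "nX (C x - C' x) \<le> 0"
    using tendsto_mult_right_zero[OF qlim, of "2 * B * \<alpha> (nG x)"] b by (intro le_lim0) auto
  then have "C x - C' x = 0" using nX_nonneg nX_zero_iff by (metis antisym)
  then show ?thesis by simp
qed

end

theorem corollary2p2:
  fixes v :: "'k::field \<Rightarrow> real"
    and scX :: "'k \<Rightarrow> 'x::ab_group_add \<Rightarrow> 'x" and nX :: "'x \<Rightarrow> real"
    and scG :: "'k \<Rightarrow> 'g::ab_group_add \<Rightarrow> 'g" and nG :: "'g \<Rightarrow> real"
    and k :: nat and \<alpha> :: "real \<Rightarrow> real" and \<delta> :: real and f :: "'g \<Rightarrow> 'x"
  assumes "nonarch_valuation v" and "nontrivial_valuation v"
    and "nonarch_normed_space scX v nX" and "norm_complete nX"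
    and "normed_space_over scG v nG"
    and "v (2 * of_nat k ^ 3) \<noteq> 0"
    and "\<forall>t\<ge>0. \<alpha> t \<ge> 0"
    and "\<forall>t\<ge>0. \<alpha> (v (of_nat k) * t) \<le> \<alpha> (v (of_nat k)) * \<alpha> t"
    and "\<alpha> (v (of_nat k)) < v (of_nat k) ^ 3"
    and "\<delta> > 0"
    and "\<forall>x y. nX (Dcubic scG scX k f x y) \<le> \<delta> * (\<alpha> (nG x) + \<alpha> (nG y))"
  shows "\<exists>!C :: 'g \<Rightarrow> 'x. (\<forall>x y. Dcubic scG scX k C x y = 0) \<and>
           (\<forall>x. nX (f x - C x) \<le> (1 / v (2 * of_nat k ^ 3)) * \<delta> * \<alpha> (nG x))"
proof -
  have vx: "vector_space scX" using assms(3) unfolding nonarch_normed_space_def by blast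
  have vg: "vector_space scG" using assms(5) unfolding normed_space_over_def by blast
  interpret S: cubsetup scX scG v nX nG k \<alpha> \<delta> f
    unfolding cubsetup_def cubsetup_axioms_def using vx vg assms by auto
  have Beq: "(1 / v (2 * of_nat k ^ 3)) * \<delta> = S.B" unfolding S.B_def by simp
  show ?thesis unfolding Beq
  proof (rule ex1I[of _ S.C])
    show "(\<forall>x y. Dcubic scG scX k S.C x y = 0) \<and> (\<forall>x. nX (f x - S.C x) \<le> S.B * \<alpha> (nG x))"
      using S.cubicC S.approx by blast
  next
    fix C' assume "(\<forall>x y. Dcubic scG scX k C' x y = 0) \<and> (\<forall>x. nX (f x - C' x) \<le> S.B * \<alpha> (nG x))"
    then show "C' = S.C" using S.uniq by blast
  qed
qed

end
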